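(* Let $a,b\in\mathbb R$, $\sigma\in(0,1]$, $t\in[0,1]$, and let $\mu=(1-t)\gamma_{a,\sigma}+t\gamma_{b,\sigma}$. Suppose \[ \min(t,1-t)\ge2\exp\Big(-\frac{(b-a)^2}{32}\Big). \] Then for every $p\ge1$, \[ \inf_{m\in\mathbb R}\mathrm W_p^p(\mu,\gamma_{m,1})\ge\min(t,1-t)\,\frac{|b-a|^p}{4^{p+1}}. \]
   Context: On $\mathbb R$, $\gamma_{a,s}$ denotes the Gaussian measure with mean $a$ and variance $s$. $\mathrm W_p(\mu,\nu)=\inf\mathbb E[|X-Y|^p]^{1/p}$, the infimum over all couplings $(X,Y)$ of $(\mu,\nu)$. *)

theory Defs
  imports "HOL-Probability.Probability"
begin

definition gauss :: "real \<Rightarrow> real \<Rightarrow> real measure" where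
  "gauss a s = density lborel (normal_density a (sqrt s))"

definition mixture :: "real \<Rightarrow> 'a measure \<Rightarrow> 'a measure \<Rightarrow> 'a measure" where
  "mixture t M N = measure_of (space M) (sets M)
     (\<lambda>A. ennreal (1 - t) * emeasure M A + ennreal t * emeasure N A)"

definition couplings :: "real measure \<Rightarrow> real measure \<Rightarrow> (real \<times> real) measure set" where
  "couplings \<mu> \<nu> = {\<pi>. prob_space \<pi> \<and> sets \<pi> = sets (borel \<Otimes>\<^sub>M borel)
      \<and> distr \<pi> borel fst = \<mu> \<and> distr \<pi> borel snd = \<nu>}"

definition Wpp :: "real \<Rightarrow> real measure \<Rightarrow> real measure \<Rightarrow> ennreal" where
  "Wpp p \<mu> \<nu> = (INF \<pi>\<in>couplings \<mu> \<nu>. \<integral>\<^sup>+ z. ennreal (\<bar>fst z - snd z\<bar> powr p) \<partial>\<pi>)"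

end

theory Submission imports Defs begin

lemma nd_total:
  assumes "0 < s"
  shows "(\<integral>\<^sup>+x. ennreal (normal_density a s x) \<partial>lborel) = 1"
  using assms by (simp add: nn_integral_eq_integral integral_normal_density)

lemma refl_int:
  fixes g :: "real \<Rightarrow> ennreal"
  assumes [measurable]: "g \<in> borel_measurable borel"
  shows "(\<integral>\<^sup>+x. g x \<partial>lborel) = (\<integral>\<^sup>+x. g (2*a - x) \<partial>lborel)"
  using nn_integral_real_affine[OF assms, of "-1" "2*a"] by simp

lemma nd_sym: "normal_density a s (2*a - x) = normal_density a s x"
  by (simp add: normal_density_def power2_commute)

lemma nd_half:
  assumes "0 < s"
  shows "(\<integral>\<^sup>+x. ennreal (normal_density a s x) * indicator {..a} x \<partial>lborel) \<ge> 1/2"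
    and "(\<integral>\<^sup>+x. ennreal (normal_density a s x) * indicator {a..} x \<partial>lborel) \<ge> 1/2"
    and "(\<integral>\<^sup>+x. ennreal (normal_density a s x) * indicator {a<..} x \<partial>lborel) \<le> 1/2"
    and "(\<integral>\<^sup>+x. ennreal (normal_density a s x) * indicator {..<a} x \<partial>lborel) \<le> 1/2"
proof -
  let ?f = "\<lambda>x. ennreal (normal_density a s x)"
  define I1 where "I1 = (\<integral>\<^sup>+x. ?f x * indicator {..a} x \<partial>lborel)"
  define I2 where "I2 = (\<integral>\<^sup>+x. ?f x * indicator {a..} x \<partial>lborel)"
  define I3 where "I3 = (\<integral>\<^sup>+x. ?f x * indicator {a<..} x \<partial>lborel)"
  define I4 where "I4 = (\<integral>\<^sup>+x. ?f x * indicator {..<a} x \<partial>lborel)"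
  have e12: "I1 = I2"
    unfolding I1_def I2_def
    by (subst refl_int[where a=a]) (auto simp: nd_sym intro!: nn_integral_cong split: split_indicator)
  have e43: "I4 = I3"
    unfolding I4_def I3_def
    by (subst refl_int[where a=a]) (auto simp: nd_sym intro!: nn_integral_cong split: split_indicator)
  have m32: "I3 \<le> I2"
    unfolding I3_def I2_def
    by (intro nn_integral_mono) (auto split: split_indicator)
  have s13: "I1 + I3 = 1"
  proof -
    have "I1 + I3 = (\<integral>\<^sup>+x. ?f x * indicator {..a} x + ?f x * indicator {a<..} x \<partial>lborel)"
      unfolding I1_def I3_def by (subst nn_integral_add) auto
    also have "\<dots> = (\<integral>\<^sup>+x. ?f x \<partial>lborel)"
      by (intro nn_integral_cong) (auto split: split_indicator)
    finally show ?thesis using nd_total[OF assms] by simp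
  qed
  have "1 \<le> 2 * I1" using s13 m32 e12
    by (metis add_left_mono mult_2)
  then have h1: "1/2 \<le> I1"
    by (intro divide_le_posI_ennreal) auto
  have h3: "I3 \<le> 1/2"
  proof -
    have "I3 + I3 \<le> 1" using s13 m32 e12 by (metis add_right_mono)
    moreover have "I3 \<noteq> top" using s13 by (metis add.commute ennreal_add_eq_top ennreal_one_neq_top)
    then obtain r where r: "I3 = ennreal r" "0 \<le> r" by (cases I3) auto
    ultimately have "ennreal (r + r) \<le> ennreal 1" by (simp add: ennreal_plus[symmetric] del: ennreal_plus)
    then have "r \<le> 1/2" by (simp add: ennreal_le_iff2)
    then have "ennreal r \<le> ennreal (1/2)" by (rule ennreal_leI)
    moreover have "ennreal (1/2) = 1/2" by (metis ennreal_divide_numeral ennreal_1 zero_le_one)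
    ultimately show ?thesis using r by simp
  qed
  show "(\<integral>\<^sup>+x. ennreal (normal_density a s x) * indicator {..a} x \<partial>lborel) \<ge> 1/2"
    using h1 I1_def by simp
  show "(\<integral>\<^sup>+x. ennreal (normal_density a s x) * indicator {a..} x \<partial>lborel) \<ge> 1/2"
    using h1 e12 I2_def by simp
  show "(\<integral>\<^sup>+x. ennreal (normal_density a s x) * indicator {a<..} x \<partial>lborel) \<le> 1/2"
    using h3 I3_def by simp
  show "(\<integral>\<^sup>+x. ennreal (normal_density a s x) * indicator {..<a} x \<partial>lborel) \<le> 1/2"
    using h3 e43 I4_def by simp
qed


lemma nd_ptwise:
  assumes "0 \<le> r" "0 < y"
  shows "normal_density m 1 (m + r + y) \<le> exp (-r\<^sup>2/2) * normal_density 0 1 y"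
    and "normal_density m 1 (m - r - y) \<le> exp (-r\<^sup>2/2) * normal_density 0 1 y"
proof -
  have "exp (-(r+y)\<^sup>2/2) \<le> exp (-r\<^sup>2/2) * exp (-y\<^sup>2/2)"
  proof -
    have "(r+y)\<^sup>2 = r\<^sup>2 + y\<^sup>2 + 2*(r*y)" by (simp add: power2_eq_square algebra_simps)
    moreover have "0 \<le> r*y" using assms by simp
    ultimately have "-(r+y)\<^sup>2/2 \<le> -r\<^sup>2/2 + -y\<^sup>2/2" by linarith
    then show ?thesis unfolding exp_add[symmetric] by simp
  qed
  then have *: "1 / sqrt (2*pi) * exp (-(r+y)\<^sup>2/2) \<le> exp (-r\<^sup>2/2) * (1 / sqrt (2*pi) * exp (-y\<^sup>2/2))"
    by (simp add: field_simps)
  show "normal_density m 1 (m + r + y) \<le> exp (-r\<^sup>2/2) * normal_density 0 1 y"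
    using * by (simp add: normal_density_def add.assoc)
  show "normal_density m 1 (m - r - y) \<le> exp (-r\<^sup>2/2) * normal_density 0 1 y"
  proof -
    have "(m - r - y - m)\<^sup>2 = (r + y)\<^sup>2" by (simp add: power2_eq_square algebra_simps)
    then show ?thesis using * by (simp add: normal_density_def)
  qed
qed

lemma nd_tail:
  assumes "0 \<le> r"
  shows "(\<integral>\<^sup>+x. ennreal (normal_density m 1 x) * indicator {m+r<..} x \<partial>lborel) \<le> ennreal (exp (-r\<^sup>2/2) / 2)"
    and "(\<integral>\<^sup>+x. ennreal (normal_density m 1 x) * indicator {..<m-r} x \<partial>lborel) \<le> ennreal (exp (-r\<^sup>2/2) / 2)"
proof -
  have H: "(\<integral>\<^sup>+y. ennreal (exp (-r\<^sup>2/2)) * (ennreal (normal_density 0 1 y) * indicator {0<..} y) \<partial>lborel)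
      \<le> ennreal (exp (-r\<^sup>2/2) / 2)"
  proof -
    have "(\<integral>\<^sup>+y. ennreal (exp (-r\<^sup>2/2)) * (ennreal (normal_density 0 1 y) * indicator {0<..} y) \<partial>lborel)
       = ennreal (exp (-r\<^sup>2/2)) * (\<integral>\<^sup>+y. ennreal (normal_density 0 1 y) * indicator {0<..} y \<partial>lborel)"
      by (rule nn_integral_cmult) auto
    also have "\<dots> \<le> ennreal (exp (-r\<^sup>2/2)) * (1/2)"
      using nd_half(3)[of 1 0] by (intro mult_left_mono) auto
    also have "\<dots> = ennreal (exp (-r\<^sup>2/2) / 2)"
      by (simp add: ennreal_divide_numeral[symmetric] divide_ennreal_def)
    finally show ?thesis .
  qed
  have "(\<integral>\<^sup>+x. ennreal (normal_density m 1 x) * indicator {m+r<..} x \<partial>lborel)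
     = ennreal \<bar>1\<bar> * (\<integral>\<^sup>+y. ennreal (normal_density m 1 (m + r + 1 * y)) * indicator {m+r<..} (m + r + 1 * y) \<partial>lborel)"
    by (rule nn_integral_real_affine) auto
  also have "\<dots> \<le> (\<integral>\<^sup>+y. ennreal (exp (-r\<^sup>2/2)) * (ennreal (normal_density 0 1 y) * indicator {0<..} y) \<partial>lborel)"
    using nd_ptwise(1)[OF assms, of _ m]
    by (auto intro!: nn_integral_mono simp: ennreal_mult[symmetric] split: split_indicator)
  finally show "(\<integral>\<^sup>+x. ennreal (normal_density m 1 x) * indicator {m+r<..} x \<partial>lborel) \<le> ennreal (exp (-r\<^sup>2/2) / 2)"
    using H by simp
  have "(\<integral>\<^sup>+x. ennreal (normal_density m 1 x) * indicator {..<m-r} x \<partial>lborel)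
     = ennreal \<bar>-1\<bar> * (\<integral>\<^sup>+y. ennreal (normal_density m 1 (m - r + -1 * y)) * indicator {..<m-r} (m - r + -1 * y) \<partial>lborel)"
    by (rule nn_integral_real_affine) auto
  also have "\<dots> \<le> (\<integral>\<^sup>+y. ennreal (exp (-r\<^sup>2/2)) * (ennreal (normal_density 0 1 y) * indicator {0<..} y) \<partial>lborel)"
    using nd_ptwise(2)[OF assms, of _ m]
    by (auto intro!: nn_integral_mono simp: ennreal_mult[symmetric] split: split_indicator)
  finally show "(\<integral>\<^sup>+x. ennreal (normal_density m 1 x) * indicator {..<m-r} x \<partial>lborel) \<le> ennreal (exp (-r\<^sup>2/2) / 2)"
    using H by simp
qed

lemma emeasure_mixture:
  assumes "sets N = sets M" "A \<in> sets M"
  shows "emeasure (mixture t M N) A = ennreal (1 - t) * emeasure M A + ennreal t * emeasure N A"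
  unfolding mixture_def
proof (rule emeasure_measure_of_sigma)
  show "sigma_algebra (space M) (sets M)" by (rule sets.sigma_algebra_axioms)
  show "positive (sets M) (\<lambda>A. ennreal (1 - t) * emeasure M A + ennreal t * emeasure N A)"
    by (simp add: positive_def)
  show "countably_additive (sets M) (\<lambda>A. ennreal (1 - t) * emeasure M A + ennreal t * emeasure N A)"
  proof (rule countably_additiveI)
    fix B :: "nat \<Rightarrow> _" assume B: "range B \<subseteq> sets M" "disjoint_family B" "\<Union> (range B) \<in> sets M"
    have BN: "range B \<subseteq> sets N" using B assms by auto
    show "(\<Sum>i. ennreal (1 - t) * emeasure M (B i) + ennreal t * emeasure N (B i)) =
      ennreal (1 - t) * emeasure M (\<Union> (range B)) + ennreal t * emeasure N (\<Union> (range B))"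
      by (simp add: suminf_add[symmetric] ennreal_suminf_cmult suminf_emeasure B BN)
  qed
qed (fact assms(2))

lemma prob_gauss: "0 < s \<Longrightarrow> prob_space (gauss a s)"
  unfolding gauss_def by (rule prob_space_normal_density) simp

lemma sets_gauss[simp]: "sets (gauss a s) = sets borel"
  unfolding gauss_def by simp

lemma emeasure_gauss:
  assumes "A \<in> sets borel"
  shows "emeasure (gauss a s) A = (\<integral>\<^sup>+x. ennreal (normal_density a (sqrt s) x) * indicator A x \<partial>lborel)"
  unfolding gauss_def using assms by (subst emeasure_density) auto

lemma measure_ge_from_emeasure:
  assumes "prob_space M" "emeasure M A \<ge> ennreal c"
  shows "measure M A \<ge> c"
proof -
  interpret prob_space M by fact
  show ?thesis using assms(2) measure_nonneg[of M A] by (auto simp: emeasure_eq_measure ennreal_le_iff2)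
qed

lemma measure_le_from_emeasure:
  assumes "prob_space M" "emeasure M A \<le> ennreal c" "0 \<le> c"
  shows "measure M A \<le> c"
proof -
  interpret prob_space M by fact
  show ?thesis using assms(2,3) by (auto simp: emeasure_eq_measure ennreal_le_iff2)
qed

lemma half_ennreal: "(1/2::ennreal) = ennreal (1/2)"
  by (metis ennreal_divide_numeral ennreal_1 zero_le_one)

lemma gauss_half:
  assumes "0 < s"
  shows "measure (gauss a s) {..a} \<ge> 1/2" "measure (gauss a s) {a..} \<ge> 1/2"
proof -
  have s: "0 < sqrt s" using assms by simp
  show "measure (gauss a s) {..a} \<ge> 1/2"
    using nd_half(1)[OF s, of a] by (intro measure_ge_from_emeasure prob_gauss assms)
       (simp add: emeasure_gauss half_ennreal)
  show "measure (gauss a s) {a..} \<ge> 1/2"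
    using nd_half(2)[OF s, of a] by (intro measure_ge_from_emeasure prob_gauss assms)
       (simp add: emeasure_gauss half_ennreal)
qed

lemma gauss_tail:
  assumes "0 \<le> r"
  shows "measure (gauss m 1) {m+r<..} \<le> exp (-r\<^sup>2/2) / 2"
    and "measure (gauss m 1) {..<m-r} \<le> exp (-r\<^sup>2/2) / 2"
proof -
  have P: "prob_space (gauss m 1)" by (rule prob_gauss) simp
  show "measure (gauss m 1) {m+r<..} \<le> exp (-r\<^sup>2/2) / 2"
    apply (rule measure_le_from_emeasure[OF P])
    using nd_tail(1)[OF assms, of m] by (simp_all add: emeasure_gauss)
  show "measure (gauss m 1) {..<m-r} \<le> exp (-r\<^sup>2/2) / 2"
    apply (rule measure_le_from_emeasure[OF P])
    using nd_tail(2)[OF assms, of m] by (simp_all add: emeasure_gauss)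
qed

lemma measure_mixture:
  assumes "prob_space M" "prob_space N" "sets N = sets M" "A \<in> sets M" "0 \<le> t" "t \<le> 1"
  shows "measure (mixture t M N) A = (1 - t) * measure M A + t * measure N A"
proof -
  interpret M: prob_space M by fact
  interpret N: prob_space N by fact
  have "measure (mixture t M N) A = enn2real (ennreal (1 - t) * ennreal (measure M A) + ennreal t * ennreal (measure N A))"
    unfolding measure_def using emeasure_mixture[OF assms(3,4), of t]
    by (simp add: M.emeasure_eq_measure N.emeasure_eq_measure)
  also have "\<dots> = (1 - t) * measure M A + t * measure N A"
    using assms(5,6) by (simp add: ennreal_mult[symmetric] ennreal_plus[symmetric] del: ennreal_plus)
  finally show ?thesis .
qed


lemma coupling_bound:
  assumes pi: "\<pi> \<in> couplings \<mu> \<nu>" and AB: "A \<in> sets borel" "B \<in> sets borel"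
    and sep: "\<And>x y. x \<in> A \<Longrightarrow> y \<in> B \<Longrightarrow> r \<le> \<bar>x - y\<bar>" and r: "0 \<le> r" and p: "0 < p"
  shows "ennreal (r powr p * (measure \<mu> A - measure \<nu> (UNIV - B)))
          \<le> (\<integral>\<^sup>+ z. ennreal (\<bar>fst z - snd z\<bar> powr p) \<partial>\<pi>)"
proof -
  have ps: "prob_space \<pi>" and S: "sets \<pi> = sets (borel \<Otimes>\<^sub>M borel)"
    and D1: "distr \<pi> borel fst = \<mu>" and D2: "distr \<pi> borel snd = \<nu>"
    using pi unfolding couplings_def by auto
  interpret prob_space \<pi> by fact
  have sp: "space \<pi> = UNIV" using sets_eq_imp_space_eq[OF S] by (simp add: space_pair_measure)
  have mf: "fst \<in> \<pi> \<rightarrow>\<^sub>M borel" using measurable_cong_sets[OF S refl] measurable_fst by blast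
  have ms: "snd \<in> \<pi> \<rightarrow>\<^sub>M borel" using measurable_cong_sets[OF S refl] measurable_snd by blast
  have mA: "measure \<mu> A = measure \<pi> (fst -` A \<inter> space \<pi>)"
    using measure_distr[OF mf AB(1)] D1 by simp
  have mB: "measure \<nu> (UNIV - B) = measure \<pi> (snd -` (UNIV - B) \<inter> space \<pi>)"
    using measure_distr[OF ms, of "UNIV - B"] D2 AB(2) by auto
  have E: "A \<times> B \<in> sets \<pi>" unfolding S using AB by auto
  have s1: "fst -` A \<inter> space \<pi> \<in> sets \<pi>" using mf AB(1) by (rule measurable_sets)
  have s2: "snd -` (UNIV - B) \<inter> space \<pi> \<in> sets \<pi>" using ms AB(2) by (intro measurable_sets[OF ms]) auto
  have "measure \<pi> (fst -` A \<inter> space \<pi>) \<le> measure \<pi> ((A \<times> B) \<union> (snd -` (UNIV - B) \<inter> space \<pi>))"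
    using E s2 by (intro finite_measure_mono) (auto simp: sp)
  also have "\<dots> \<le> measure \<pi> (A \<times> B) + measure \<pi> (snd -` (UNIV - B) \<inter> space \<pi>)"
    using E s2 by (intro measure_subadditive) auto
  finally have key: "measure \<mu> A - measure \<nu> (UNIV - B) \<le> measure \<pi> (A \<times> B)"
    using mA mB by simp
  have rp: "0 \<le> r powr p" by simp
  have "ennreal (r powr p * (measure \<mu> A - measure \<nu> (UNIV - B))) \<le> ennreal (r powr p * measure \<pi> (A \<times> B))"
    using key rp by (intro ennreal_leI mult_left_mono) auto
  also have "\<dots> = ennreal (r powr p) * emeasure \<pi> (A \<times> B)"
    by (simp add: emeasure_eq_measure ennreal_mult)
  also have "\<dots> = (\<integral>\<^sup>+ z. ennreal (r powr p) * indicator (A \<times> B) z \<partial>\<pi>)"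
    using E by (simp add: nn_integral_cmult_indicator)
  also have "\<dots> \<le> (\<integral>\<^sup>+ z. ennreal (\<bar>fst z - snd z\<bar> powr p) \<partial>\<pi>)"
  proof (intro nn_integral_mono)
    fix z :: "real \<times> real"
    show "ennreal (r powr p) * indicator (A \<times> B) z \<le> ennreal (\<bar>fst z - snd z\<bar> powr p)"
    proof (cases "z \<in> A \<times> B")
      case True
      then have "r \<le> \<bar>fst z - snd z\<bar>" using sep by (cases z) auto
      then have "r powr p \<le> \<bar>fst z - snd z\<bar> powr p" using r p by (intro powr_mono2) auto
      then show ?thesis using True by (simp add: ennreal_leI)
    qed simp
  qed
  finally show ?thesis .
qed


lemma gauss_tail':
  assumes "0 \<le> r"
  shows "x \<le> m - r \<Longrightarrow> measure (gauss m 1) (UNIV - {x..}) \<le> exp (-r\<^sup>2/2) / 2"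
    and "m + r \<le> x \<Longrightarrow> measure (gauss m 1) (UNIV - {..x}) \<le> exp (-r\<^sup>2/2) / 2"
proof -
  assume x: "x \<le> m - r"
  define r' where "r' = m - x"
  have "r \<le> r'" using x r'_def by simp
  then have "r\<^sup>2 \<le> r'\<^sup>2" using assms by (intro power_mono) auto
  then have le: "exp (-r'\<^sup>2/2) / 2 \<le> exp (-r\<^sup>2/2) / 2" by simp
  have "UNIV - {x..} = {..<m - r'}" using r'_def by auto
  then show "measure (gauss m 1) (UNIV - {x..}) \<le> exp (-r\<^sup>2/2) / 2"
  proof -
    have "measure (gauss m 1) {..<m - r'} \<le> exp (-r'\<^sup>2/2) / 2"
      by (rule gauss_tail(2)) (use \<open>r \<le> r'\<close> assms in simp)
    then show ?thesis using le by (simp only: \<open>UNIV - _ = _\<close>)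
  qed
next
  assume x: "m + r \<le> x"
  define r' where "r' = x - m"
  have "r \<le> r'" using x r'_def by simp
  then have "r\<^sup>2 \<le> r'\<^sup>2" using assms by (intro power_mono) auto
  then have le: "exp (-r'\<^sup>2/2) / 2 \<le> exp (-r\<^sup>2/2) / 2" by simp
  have "UNIV - {..x} = {m + r'<..}" using r'_def by auto
  then show "measure (gauss m 1) (UNIV - {..x}) \<le> exp (-r\<^sup>2/2) / 2"
  proof -
    have "measure (gauss m 1) {m + r'<..} \<le> exp (-r'\<^sup>2/2) / 2"
      by (rule gauss_tail(1)) (use \<open>r \<le> r'\<close> assms in simp)
    then show ?thesis using le by (simp only: \<open>UNIV - _ = _\<close>)
  qed
qed

lemma case_bound:
  assumes pi: "\<pi> \<in> couplings \<mu> \<nu>" and AB: "A \<in> sets borel" "B \<in> sets borel"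
    and sep: "\<And>x y. x \<in> A \<Longrightarrow> y \<in> B \<Longrightarrow> r \<le> \<bar>x - y\<bar>" and r: "0 \<le> r" and p: "0 < p"
    and mu: "measure \<mu> A \<ge> w / 2" and nu: "measure \<nu> (UNIV - B) \<le> e / 2"
    and w: "w \<ge> mn" and mn: "mn \<ge> 2 * e"
  shows "ennreal (mn * r powr p / 4) \<le> (\<integral>\<^sup>+ z. ennreal (\<bar>fst z - snd z\<bar> powr p) \<partial>\<pi>)"
proof -
  have k: "mn / 4 \<le> measure \<mu> A - measure \<nu> (UNIV - B)" using mu nu w mn by linarith
  have "mn * r powr p / 4 \<le> r powr p * (measure \<mu> A - measure \<nu> (UNIV - B))"
    using mult_left_mono[OF k, of "r powr p"] by (simp add: algebra_simps)
  then have "ennreal (mn * r powr p / 4) \<le> ennreal (r powr p * (measure \<mu> A - measure \<nu> (UNIV - B)))"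
    by (rule ennreal_leI)
  also have "\<dots> \<le> (\<integral>\<^sup>+ z. ennreal (\<bar>fst z - snd z\<bar> powr p) \<partial>\<pi>)"
    by (rule coupling_bound[OF pi AB sep r p])
  finally show ?thesis .
qed


theorem lemma3:
  fixes a b \<sigma> t p :: real
  assumes "0 < \<sigma>" "\<sigma> \<le> 1" "0 \<le> t" "t \<le> 1"
    and "min t (1 - t) \<ge> 2 * exp (- (b - a)\<^sup>2 / 32)"
    and "p \<ge> 1"
  shows "(INF m\<in>(UNIV::real set). Wpp p (mixture t (gauss a \<sigma>) (gauss b \<sigma>)) (gauss m 1))
           \<ge> ennreal (min t (1 - t) * \<bar>b - a\<bar> powr p / 4 powr (p + 1))"
proof -
  define mn where "mn = min t (1 - t)"
  define e where "e = exp (- (b - a)\<^sup>2 / 32)"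
  define r where "r = \<bar>b - a\<bar> / 4"
  define \<mu> where "\<mu> = mixture t (gauss a \<sigma>) (gauss b \<sigma>)"
  have mn: "mn \<ge> 2 * e" using assms(5) mn_def e_def by simp
  have p: "0 < p" using assms(6) by simp
  have r0: "0 \<le> r" using r_def by simp
  have er: "exp (-r\<^sup>2/2) = e"
    unfolding e_def r_def by (simp add: power_divide power2_abs)
  have ab: "a \<noteq> b"
  proof
    assume "a = b"
    then have "e = 1" using e_def by simp
    then show False using mn mn_def by linarith
  qed
  have Pa: "prob_space (gauss a \<sigma>)" and Pb: "prob_space (gauss b \<sigma>)"
    using assms(1) by (auto intro: prob_gauss)
  have mmu: "measure \<mu> S = (1 - t) * measure (gauss a \<sigma>) S + t * measure (gauss b \<sigma>) S"
    if "S \<in> sets borel" for S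
    unfolding \<mu>_def using that assms(3,4) by (intro measure_mixture Pa Pb) auto
  have mua: "measure \<mu> S \<ge> (1 - t) * measure (gauss a \<sigma>) S"
    and mub: "measure \<mu> S \<ge> t * measure (gauss b \<sigma>) S" if "S \<in> sets borel" for S
    using mmu[OF that] assms(3,4) by auto
  have target: "mn * \<bar>b - a\<bar> powr p / 4 powr (p + 1) = mn * r powr p / 4"
    unfolding r_def by (simp add: powr_divide powr_add)
  have main: "ennreal (mn * r powr p / 4) \<le> (\<integral>\<^sup>+ z. ennreal (\<bar>fst z - snd z\<bar> powr p) \<partial>\<pi>)"
    if pi: "\<pi> \<in> couplings \<mu> (gauss m 1)" for \<pi> m
  proof (cases "a < b")
    case True
    then have rd: "r = (b - a) / 4" using r_def by simp
    show ?thesis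
    proof (cases "m \<ge> (a + b) / 2")
      case True
      show ?thesis
      proof (rule case_bound[OF pi _ _ _ r0 p _ _ _ mn, of "{..a}" "{a + r..}" "1 - t"])
        show "(1 - t) / 2 \<le> measure \<mu> {..a}"
          using mua[of "{..a}"] gauss_half(1)[OF assms(1), of a] assms(3,4)
            mult_left_mono[of "1/2" "measure (gauss a \<sigma>) {..a}" "1 - t"] by auto
        show "measure (gauss m 1) (UNIV - {a + r..}) \<le> e / 2"
        proof -
          have hh: "a + r \<le> m - r" using True rd by simp
          show ?thesis using gauss_tail'(1)[OF r0, of "a + r" m, OF hh] er by simp
        qed
      qed (auto simp: mn_def)
    next
      case False
      show ?thesis
      proof (rule case_bound[OF pi _ _ _ r0 p _ _ _ mn, of "{b..}" "{..b - r}" "t"])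
        show "t / 2 \<le> measure \<mu> {b..}"
          using mub[of "{b..}"] gauss_half(2)[OF assms(1), of b] assms(3,4)
            mult_left_mono[of "1/2" "measure (gauss b \<sigma>) {b..}" "t"] by auto
        show "measure (gauss m 1) (UNIV - {..b - r}) \<le> e / 2"
        proof -
          have hh: "m + r \<le> b - r" using False rd by simp
          show ?thesis using gauss_tail'(2)[OF r0, of m "b - r", OF hh] er by simp
        qed
      qed (auto simp: mn_def)
    qed
  next
    case False
    then have rd: "r = (a - b) / 4" using r_def ab by simp
    have ba: "b < a" using False ab by simp
    show ?thesis
    proof (cases "m \<ge> (a + b) / 2")
      case True
      show ?thesis
      proof (rule case_bound[OF pi _ _ _ r0 p _ _ _ mn, of "{..b}" "{b + r..}" "t"])
        show "t / 2 \<le> measure \<mu> {..b}"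
          using mub[of "{..b}"] gauss_half(1)[OF assms(1), of b] assms(3,4)
            mult_left_mono[of "1/2" "measure (gauss b \<sigma>) {..b}" "t"] by auto
        show "measure (gauss m 1) (UNIV - {b + r..}) \<le> e / 2"
        proof -
          have hh: "b + r \<le> m - r" using True rd by simp
          show ?thesis using gauss_tail'(1)[OF r0, of "b + r" m, OF hh] er by simp
        qed
      qed (auto simp: mn_def)
    next
      case False
      show ?thesis
      proof (rule case_bound[OF pi _ _ _ r0 p _ _ _ mn, of "{a..}" "{..a - r}" "1 - t"])
        show "(1 - t) / 2 \<le> measure \<mu> {a..}"
          using mua[of "{a..}"] gauss_half(2)[OF assms(1), of a] assms(3,4)
            mult_left_mono[of "1/2" "measure (gauss a \<sigma>) {a..}" "1 - t"] by auto
        show "measure (gauss m 1) (UNIV - {..a - r}) \<le> e / 2"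
        proof -
          have hh: "m + r \<le> a - r" using False rd by simp
          show ?thesis using gauss_tail'(2)[OF r0, of m "a - r", OF hh] er by simp
        qed
      qed (auto simp: mn_def)
    qed
  qed
  show ?thesis
    unfolding Wpp_def \<mu>_def[symmetric] mn_def[symmetric] target
    by (intro INF_greatest main)
qed

end
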